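(* Let $G$ be a finite graph with $n$ vertices such that $\mathrm{Aut}(G)$ is cyclic of order $t$, generated by $\pi$, and let $t=\prod_{i=1}^s p_i^{r_i}$ be the prime factorization of $t$ (distinct primes $p_i$, $r_i\ge1$). Let $P^*=\{\pi^{t/p_1},\pi^{t/p_2},\dots,\pi^{t/p_s}\}$. Then for every positive integer $k$, $$L(G,k)=\sum_{P\subseteq P^*}(-1)^{|P|}N_{\ge}(P).$$
   Context: A $k$-labeling of $G$ is a map $\phi:V(G)\to\{1,\dots,k\}$; an automorphism $\pi$ preserves $\phi$ if $\phi(\pi(v))=\phi(v)$ for all $v$; $\phi$ is distinguishing if only the identity preserves it; $L(G,k)$ is the number of distinguishing $k$-labelings. For $P\subseteq\mathrm{Aut}(G)$, $N_{\ge}(P)$ denotes the number of $k$-labelings of $G$ preserved by every automorphism in $P$ (so $N_{\ge}(\emptyset)=k^n$). *)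

theory Defs
  imports "HOL-Library.FuncSet" "HOL-Computational_Algebra.Primes"
begin

definition graph :: "'a set \<Rightarrow> ('a \<Rightarrow> 'a \<Rightarrow> bool) \<Rightarrow> bool" where
  "graph V E \<longleftrightarrow> finite V \<and> (\<forall>u v. E u v \<longrightarrow> u \<in> V \<and> v \<in> V)
     \<and> (\<forall>u v. E u v \<longrightarrow> E v u) \<and> (\<forall>v. \<not> E v v)"

text \<open>Automorphisms, represented as permutations of V fixing everything outside V
  (so the identity automorphism is id and composition is function composition).\<close>
definition Aut :: "'a set \<Rightarrow> ('a \<Rightarrow> 'a \<Rightarrow> bool) \<Rightarrow> ('a \<Rightarrow> 'a) set" where
  "Aut V E = {\<sigma>. bij_betw \<sigma> V V \<and> (\<forall>x. x \<notin> V \<longrightarrow> \<sigma> x = x)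
               \<and> (\<forall>u\<in>V. \<forall>v\<in>V. E u v \<longleftrightarrow> E (\<sigma> u) (\<sigma> v))}"

definition labelings :: "'a set \<Rightarrow> nat \<Rightarrow> ('a \<Rightarrow> nat) set" where
  "labelings V k = V \<rightarrow>\<^sub>E {1..k}"

definition preserves :: "'a set \<Rightarrow> ('a \<Rightarrow> 'a) \<Rightarrow> ('a \<Rightarrow> nat) \<Rightarrow> bool" where
  "preserves V \<sigma> \<phi> \<longleftrightarrow> (\<forall>v\<in>V. \<phi> (\<sigma> v) = \<phi> v)"

definition distinguishing :: "'a set \<Rightarrow> ('a \<Rightarrow> 'a \<Rightarrow> bool) \<Rightarrow> ('a \<Rightarrow> nat) \<Rightarrow> bool" where
  "distinguishing V E \<phi> \<longleftrightarrow> (\<forall>\<sigma>\<in>Aut V E. preserves V \<sigma> \<phi> \<longrightarrow> \<sigma> = id)"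

definition L :: "'a set \<Rightarrow> ('a \<Rightarrow> 'a \<Rightarrow> bool) \<Rightarrow> nat \<Rightarrow> nat" where
  "L V E k = card {\<phi> \<in> labelings V k. distinguishing V E \<phi>}"

definition N_ge :: "'a set \<Rightarrow> nat \<Rightarrow> ('a \<Rightarrow> 'a) set \<Rightarrow> nat" where
  "N_ge V k P = card {\<phi> \<in> labelings V k. \<forall>\<sigma>\<in>P. preserves V \<sigma> \<phi>}"

end

theory Submission
  imports Defs "HOL-Combinatorics.Permutations"
begin

lemma incl_excl:
  fixes Q :: "'s \<Rightarrow> 'x \<Rightarrow> bool"
  assumes "finite S" "finite A"
  shows "int (card {x\<in>A. \<forall>s\<in>S. \<not> Q s x}) =
    (\<Sum>P\<in>Pow S. (-1) ^ card P * int (card {x\<in>A. \<forall>s\<in>P. Q s x}))"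
  using assms
proof (induction S arbitrary: A rule: finite_induct)
  case empty
  then show ?case by simp
next
  case (insert y S)
  define A' where "A' = {a\<in>A. Q y a}"
  have fA': "finite A'" using insert.prems unfolding A'_def by simp
  have e1: "{a\<in>A. \<forall>s\<in>insert y S. \<not> Q s a} = {a\<in>A. \<forall>s\<in>S. \<not> Q s a} - {a\<in>A'. \<forall>s\<in>S. \<not> Q s a}"
    unfolding A'_def by auto
  have sub: "{a\<in>A'. \<forall>s\<in>S. \<not> Q s a} \<subseteq> {a\<in>A. \<forall>s\<in>S. \<not> Q s a}" unfolding A'_def by auto
  have le: "card {a\<in>A'. \<forall>s\<in>S. \<not> Q s a} \<le> card {a\<in>A. \<forall>s\<in>S. \<not> Q s a}"
    using sub insert.prems by (intro card_mono) auto
  have L: "int (card {a\<in>A. \<forall>s\<in>insert y S. \<not> Q s a}) =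
      int (card {a\<in>A. \<forall>s\<in>S. \<not> Q s a}) - int (card {a\<in>A'. \<forall>s\<in>S. \<not> Q s a})"
    unfolding e1 using sub le insert.prems fA' by (simp add: card_Diff_subset of_nat_diff)
  have pw: "Pow (insert y S) = Pow S \<union> insert y ` Pow S" by (rule Pow_insert)
  have disj: "Pow S \<inter> insert y ` Pow S = {}" using insert.hyps by auto
  have inj: "inj_on (insert y) (Pow S)" using insert.hyps
    by (auto simp: inj_on_def)
  have fin1: "finite (Pow S)" using insert.hyps by simp
  have "(\<Sum>P\<in>insert y ` Pow S. (-1) ^ card P * int (card {a\<in>A. \<forall>s\<in>P. Q s a}))
      = (\<Sum>P\<in>Pow S. (-1) ^ card (insert y P) * int (card {a\<in>A. \<forall>s\<in>insert y P. Q s a}))"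
    by (subst sum.reindex[OF inj]) simp
  also have "\<dots> = (\<Sum>P\<in>Pow S. - ((-1) ^ card P * int (card {a\<in>A'. \<forall>s\<in>P. Q s a})))"
  proof (rule sum.cong)
    fix P assume P: "P \<in> Pow S"
    have fP: "finite P" using P insert.hyps finite_subset by auto
    have yP: "y \<notin> P" using P insert.hyps by auto
    have "{a\<in>A. \<forall>s\<in>insert y P. Q s a} = {a\<in>A'. \<forall>s\<in>P. Q s a}" unfolding A'_def by auto
    then show "(-1) ^ card (insert y P) * int (card {a\<in>A. \<forall>s\<in>insert y P. Q s a})
        = - ((-1) ^ card P * int (card {a\<in>A'. \<forall>s\<in>P. Q s a}))"
      using fP yP by simp
  qed simp
  also have "\<dots> = - int (card {a\<in>A'. \<forall>s\<in>S. \<not> Q s a})"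
    using insert.IH[OF fA'] by (simp add: sum_negf)
  finally have R2: "(\<Sum>P\<in>insert y ` Pow S. (-1) ^ card P * int (card {a\<in>A. \<forall>s\<in>P. Q s a}))
      = - int (card {a\<in>A'. \<forall>s\<in>S. \<not> Q s a})" .
  show ?case
    unfolding L pw
    by (subst sum.union_disjoint[OF fin1 _ disj]) (use fin1 R2 insert.IH[OF insert.prems] in auto)
qed

lemma cyc:
  fixes \<pi> :: "'a \<Rightarrow> 'a"
  assumes injp: "inj \<pi>" and fin: "finite (range (\<lambda>j. \<pi> ^^ j))"
    and t: "t = card (range (\<lambda>j::nat. \<pi> ^^ j))"
  shows "t > 0 \<and> (\<forall>a. \<pi> ^^ a = id \<longleftrightarrow> t dvd a)"
proof -
  define p where "p = (\<lambda>f::'a\<Rightarrow>'a. \<pi> \<circ> f)"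
  have pn: "(p ^^ n) id = \<pi> ^^ n" for n
    by (induction n) (auto simp: p_def)
  have injP: "inj p" unfolding p_def inj_def
    using injp by (auto simp: fun_eq_iff inj_def)
  have "{y. \<exists>n. y = (p ^^ n) id} = range (\<lambda>j. \<pi> ^^ j)" by (auto simp: pn)
  with fin have "finite {y. \<exists>n. y = (p ^^ n) id}" by simp
  then obtain n where n: "n > 0" "\<pi> ^^ n = id"
    using funpow_inj_finite[OF injP] pn by metis
  define d where "d = (LEAST n. n > 0 \<and> \<pi> ^^ n = id)"
  have d: "d > 0 \<and> \<pi> ^^ d = id" unfolding d_def by (rule LeastI[of _ n]) (use n in auto)
  have dmin: "\<pi> ^^ m \<noteq> id" if "0 < m" "m < d" for m
    using not_less_Least[of m "\<lambda>n. n > 0 \<and> \<pi> ^^ n = id"] that unfolding d_def by auto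
  have red: "\<pi> ^^ a = \<pi> ^^ (a mod d)" for a
  proof -
    have "\<pi> ^^ a = \<pi> ^^ (d * (a div d) + a mod d)" by simp
    also have "\<dots> = (\<pi> ^^ d) ^^ (a div d) \<circ> \<pi> ^^ (a mod d)"
      by (simp only: funpow_add funpow_mult)
    finally show ?thesis using d by (simp add: id_funpow)
  qed
  have rng: "range (\<lambda>j. \<pi> ^^ j) = (\<lambda>j. \<pi> ^^ j) ` {..<d}"
  proof -
    have "\<pi> ^^ a \<in> (\<lambda>j. \<pi> ^^ j) ` {..<d}" for a
      using red[of a] d by (intro image_eqI[of _ _ "a mod d"]) auto
    then show ?thesis by auto
  qed
  have injd: "inj_on (\<lambda>j. \<pi> ^^ j) {..<d}"
  proof -
    have *: "False" if "a < b" "b < d" "\<pi> ^^ a = \<pi> ^^ b" for a b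
    proof -
      have "\<pi> ^^ b = \<pi> ^^ a \<circ> \<pi> ^^ (b - a)"
        using that by (metis funpow_add le_add_diff_inverse less_imp_le)
      then have "\<pi> ^^ a \<circ> \<pi> ^^ (b - a) = \<pi> ^^ a \<circ> id" using that by simp
      moreover have "inj (\<pi> ^^ a)" using inj_fn[OF injp] .
      ultimately have "\<pi> ^^ (b - a) = id"
        by (auto simp: fun_eq_iff inj_def)
      then show False using dmin[of "b - a"] that by auto
    qed
    show ?thesis unfolding inj_on_def
      by (metis * lessThan_iff linorder_neqE_nat)
  qed
  have td: "t = d" unfolding t rng using card_image[OF injd] by simp
  have "\<pi> ^^ a = id \<longleftrightarrow> d dvd a" for a
  proof
    assume "\<pi> ^^ a = id"
    then have "\<pi> ^^ (a mod d) = id" using red by metis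
    then have "\<not> (0 < a mod d)" using dmin[of "a mod d"] d by auto
    then show "d dvd a" by (simp add: mod_eq_0_iff_dvd)
  next
    assume "d dvd a"
    then show "\<pi> ^^ a = id" using red[of a] by simp
  qed
  then show ?thesis using td d by auto
qed

lemma funpow_in:
  assumes "\<forall>v\<in>V. \<sigma> v \<in> V" "v \<in> V"
  shows "(\<sigma> ^^ m) v \<in> V"
  using assms by (induction m) auto

lemma preserves_pow:
  assumes "\<forall>v\<in>V. \<sigma> v \<in> V" "preserves V \<sigma> \<phi>"
  shows "preserves V (\<sigma> ^^ m) \<phi>"
  using assms funpow_in[OF assms(1)]
  by (induction m) (auto simp: preserves_def)

theorem theorem2:
  fixes V :: "'a set" and E :: "'a \<Rightarrow> 'a \<Rightarrow> bool" and \<pi> :: "'a \<Rightarrow> 'a"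
    and t k :: nat
  assumes "graph V E"
    and "\<pi> \<in> Aut V E"
    and "Aut V E = {\<pi> ^^ j | j. True}"
    and "t = card (Aut V E)"
    and "k \<ge> 1"
  shows "int (L V E k) =
    (\<Sum>P \<in> Pow ((\<lambda>p. \<pi> ^^ (t div p)) ` prime_factors t).
        (-1) ^ card P * int (N_ge V k P))"
proof -
  have fV: "finite V" using assms(1) unfolding graph_def by auto
  have perm: "\<sigma> permutes V" if "\<sigma> \<in> Aut V E" for \<sigma>
    using that unfolding Aut_def by (auto intro: bij_imp_permutes)
  have inV: "\<forall>v\<in>V. \<sigma> v \<in> V" if "\<sigma> \<in> Aut V E" for \<sigma>
    using perm[OF that] by (simp add: permutes_in_image)
  have rng: "range (\<lambda>j. \<pi> ^^ j) = Aut V E" using assms(3) by auto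
  have finA: "finite (Aut V E)"
    using finite_subset[OF _ finite_permutations[OF fV]] perm by blast
  have injp: "inj \<pi>" using permutes_bij[OF perm[OF assms(2)]] bij_is_inj by blast
  from cyc[OF injp] rng finA assms(4)
  have t0: "t > 0" and ord: "\<And>a. \<pi> ^^ a = id \<longleftrightarrow> t dvd a" by auto
  have inAut: "\<pi> ^^ j \<in> Aut V E" for j using assms(3) by auto
  define Ps where "Ps = (\<lambda>p. \<pi> ^^ (t div p)) ` prime_factors t"
  have key: "distinguishing V E \<phi> \<longleftrightarrow> (\<forall>\<sigma>\<in>Ps. \<not> preserves V \<sigma> \<phi>)" for \<phi>
  proof
    assume D: "distinguishing V E \<phi>"
    show "\<forall>\<sigma>\<in>Ps. \<not> preserves V \<sigma> \<phi>"
    proof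
      fix \<sigma> assume "\<sigma> \<in> Ps"
      then obtain p where p: "prime p" "p dvd t" "\<sigma> = \<pi> ^^ (t div p)"
        unfolding Ps_def using t0 by auto
      have "0 < t div p" using p t0
        by (metis dvd_div_eq_0_iff bot_nat_0.not_eq_extremum less_numeral_extra(3) prime_gt_0_nat)
      moreover have "t div p < t" using p t0 prime_gt_1_nat by simp
      ultimately have "\<not> t dvd (t div p)" by (auto dest: dvd_imp_le)
      then have "\<sigma> \<noteq> id" using ord p by auto
      then show "\<not> preserves V \<sigma> \<phi>" using D inAut p unfolding distinguishing_def by auto
    qed
  next
    assume N: "\<forall>\<sigma>\<in>Ps. \<not> preserves V \<sigma> \<phi>"
    show "distinguishing V E \<phi>" unfolding distinguishing_def
    proof (intro ballI impI)
      fix \<sigma> assume s: "\<sigma> \<in> Aut V E" and pr: "preserves V \<sigma> \<phi>"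
      obtain j where j: "\<sigma> = \<pi> ^^ j" using s assms(3) by auto
      show "\<sigma> = id"
      proof (rule ccontr)
        assume "\<sigma> \<noteq> id"
        then have ntj: "\<not> t dvd j" using ord j by auto
        then have j0: "j \<noteq> 0" by (metis dvd_0_right)
        define g where "g = gcd j t"
        have g0: "g > 0" using j0 unfolding g_def by simp
        have gt: "g dvd t" unfolding g_def by simp
        have gne: "g \<noteq> t" using ntj unfolding g_def by (metis gcd_dvd1)
        obtain q where q: "t = g * q" using gt by blast
        have q1: "q \<noteq> 1" using q gne by auto
        then obtain p where p: "prime p" "p dvd q" using prime_factor_nat by blast
        obtain r where r: "q = p * r" using p by blast
        have tdp: "t div p = g * r" using q r p prime_gt_0_nat by simp
        have ptd: "p dvd t" using q p by simp
        obtain x y where xy: "j * x = t * y + g" using bezout_nat[OF j0, of t] unfolding g_def by blast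
        have "preserves V (\<sigma> ^^ (x * r)) \<phi>" using preserves_pow[OF inV[OF s] pr] .
        moreover have "\<sigma> ^^ (x * r) = \<pi> ^^ (t div p)"
        proof -
          have "\<sigma> ^^ (x * r) = \<pi> ^^ (t * (y * r) + t div p)"
            unfolding j funpow_mult tdp
            by (metis xy add_mult_distrib mult.assoc)
          also have "\<dots> = \<pi> ^^ (t * (y * r)) \<circ> \<pi> ^^ (t div p)" by (simp only: funpow_add)
          also have "\<pi> ^^ (t * (y * r)) = id" using ord by simp
          finally show ?thesis by simp
        qed
        moreover have "\<pi> ^^ (t div p) \<in> Ps" unfolding Ps_def using p ptd t0 by (intro imageI) (simp add: in_prime_factors_iff)
        ultimately show False using N by auto
      qed
    qed
  qed
  have finL: "finite (labelings V k)" unfolding labelings_def using fV by (simp add: finite_PiE)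
  have "L V E k = card {\<phi> \<in> labelings V k. \<forall>\<sigma>\<in>Ps. \<not> preserves V \<sigma> \<phi>}"
    unfolding L_def using key by simp
  moreover have "finite Ps" unfolding Ps_def by simp
  ultimately show ?thesis
    using incl_excl[of Ps "labelings V k" "\<lambda>\<sigma> \<phi>. preserves V \<sigma> \<phi>"] finL
    unfolding N_ge_def Ps_def by simp
qed

end
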